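(* Let $\zeta(dx)=e^{-U(x)}dx$ be a probability measure on $\mathbb R^d$ with $U\in C^2(\mathbb R^d)$, and suppose there exist $\alpha_U>0$ and $\tilde g_U\in\tilde{\mathcal G}$ such that $\kappa_U(r)\ge\alpha_U-r^{-1}\tilde g_U(r)$ for all $r>0$. Then for every $\sigma\in(0,\alpha_U/2)$, $\int\exp(\sigma|x|^2)\,\zeta(dx)<+\infty$.
   Context: For differentiable $U:\mathbb R^d\to\mathbb R$ and $r>0$, $\kappa_U(r):=\inf\{\langle\nabla U(x)-\nabla U(y),x-y\rangle/|x-y|^2: x,y\in\mathbb R^d,\ |x-y|=r\}$. $\mathcal G$ is the set of $g\in C^2((0,\infty),[0,\infty))$ such that $r\mapsto r^{1/2}g(r^{1/2})$ is non-decreasing and concave and $\lim_{r\downarrow0}rg(r)=0$; $\tilde{\mathcal G}$ is the set of bounded $g\in\mathcal G$ with $\lim_{r\downarrow0}g(r)=0$, $g'\ge0$ and $2g''+gg'\le0$. *)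

theory Defs
  imports "HOL-Analysis.Analysis"
begin

definition grad :: "('a::euclidean_space \<Rightarrow> real) \<Rightarrow> 'a \<Rightarrow> 'a" where
  "grad U x = (THE g. (U has_derivative (\<lambda>h. g \<bullet> h)) (at x))"

definition C2_on_UNIV :: "('a::euclidean_space \<Rightarrow> real) \<Rightarrow> bool" where
  "C2_on_UNIV U \<longleftrightarrow> (\<exists>G :: 'a \<Rightarrow> 'a. \<exists>H :: 'a \<Rightarrow> ('a \<Rightarrow>\<^sub>L 'a).
      (\<forall>x. (U has_derivative (\<lambda>h. G x \<bullet> h)) (at x)) \<and>
      (\<forall>x. (G has_derivative blinfun_apply (H x)) (at x)) \<and>
      continuous_on UNIV H)"

text \<open>kappa_U(r), taken in the extended reals so that an unbounded-below set gives -\<infinity>.\<close>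
definition kappa :: "('a::euclidean_space \<Rightarrow> real) \<Rightarrow> real \<Rightarrow> ereal" where
  "kappa U r = (INF p \<in> {(x, y). norm (x - y) = r}.
      ereal (((grad U (fst p) - grad U (snd p)) \<bullet> (fst p - snd p)) / (norm (fst p - snd p))\<^sup>2))"

definition C2_pos :: "(real \<Rightarrow> real) \<Rightarrow> bool" where
  "C2_pos g \<longleftrightarrow> (\<forall>r>0. g r \<ge> 0) \<and> g differentiable_on {0<..} \<and>
      deriv g differentiable_on {0<..} \<and> continuous_on {0<..} (deriv (deriv g))"

definition classG :: "(real \<Rightarrow> real) set" where
  "classG = {g. C2_pos g \<and>
      mono_on {0<..} (\<lambda>r. sqrt r * g (sqrt r)) \<and>
      concave_on {0<..} (\<lambda>r. sqrt r * g (sqrt r)) \<and>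
      ((\<lambda>r. r * g r) \<longlongrightarrow> 0) (at_right 0)}"

definition classG_tilde :: "(real \<Rightarrow> real) set" where
  "classG_tilde = {g. g \<in> classG \<and> bounded (g ` {0<..}) \<and>
      (g \<longlongrightarrow> 0) (at_right 0) \<and>
      (\<forall>r>0. deriv g r \<ge> 0) \<and>
      (\<forall>r>0. 2 * deriv (deriv g) r + g r * deriv g r \<le> 0)}"

end

theory Submission imports Defs "HOL-Probability.Probability" begin

lemma gauss1_fin:
  fixes \<beta> :: real assumes b: "\<beta> > 0"
  shows "(\<integral>\<^sup>+ t. ennreal (exp (- \<beta> * t\<^sup>2)) \<partial>lborel) < \<infinity>"
proof -
  define s where "s = sqrt (1 / (2 * \<beta>))"
  have s2: "s\<^sup>2 = 1 / (2 * \<beta>)" using b by (simp add: s_def)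
  have eq: "exp (- \<beta> * t\<^sup>2) = sqrt (2 * pi * s\<^sup>2) * normal_density 0 s t" for t
    using b s2 by (auto simp add: normal_density_def field_simps)
  have "integrable lborel (\<lambda>t. sqrt (2 * pi * s\<^sup>2) * normal_density 0 s t)"
    using integrable_normal_density[of s 0] b by (intro integrable_mult_right) (simp add: s_def)
  then have "integrable lborel (\<lambda>t. exp (- \<beta> * t\<^sup>2))" by (simp only: eq[symmetric])
  then show ?thesis
    by (simp add: integrable_iff_bounded)
qed

lemma gauss_fin:
  fixes \<beta> :: real assumes b: "\<beta> > 0"
  shows "(\<integral>\<^sup>+ x. ennreal (exp (- \<beta> * (norm (x::'a::euclidean_space))\<^sup>2)) \<partial>lborel) < \<infinity>"
proof -
  have "(\<lambda>x::'a. ennreal (exp (- \<beta> * (norm x)\<^sup>2))) = (\<lambda>x. \<Prod>b\<in>Basis. ennreal (exp (- \<beta> * (x \<bullet> b)\<^sup>2)))"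
  proof
    fix x :: 'a
    have "(norm x)\<^sup>2 = (\<Sum>b\<in>Basis. (x \<bullet> b)\<^sup>2)"
      unfolding power2_norm_eq_inner by (subst euclidean_inner) (simp add: power2_eq_square)
    then have "exp (- \<beta> * (norm x)\<^sup>2) = (\<Prod>b\<in>Basis. exp (- \<beta> * (x \<bullet> b)\<^sup>2))"
      by (simp add: sum_distrib_left exp_sum flip: sum_negf)
    then show "ennreal (exp (- \<beta> * (norm x)\<^sup>2)) = (\<Prod>b\<in>Basis. ennreal (exp (- \<beta> * (x \<bullet> b)\<^sup>2)))"
      by (simp add: prod_ennreal)
  qed
  moreover have "(\<integral>\<^sup>+x. (\<Prod>b\<in>(Basis::'a set). ennreal (exp (- \<beta> * (x \<bullet> b)\<^sup>2))) \<partial>lborel)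
     = (\<Prod>b\<in>(Basis::'a set). (\<integral>\<^sup>+t. ennreal (exp (- \<beta> * t\<^sup>2)) \<partial>lborel))"
    by (rule nn_integral_lborel_prod) auto
  moreover have "(\<Prod>b\<in>(Basis::'a set). (\<integral>\<^sup>+t. ennreal (exp (- \<beta> * t\<^sup>2)) \<partial>lborel)) < \<infinity>"
    using gauss1_fin[OF b] by (simp add: power_less_top_ennreal)
  ultimately show ?thesis by simp
qed
lemma lower_bound:
  fixes U :: "'a::euclidean_space \<Rightarrow> real" and G :: "'a \<Rightarrow> 'a"
  assumes dU: "\<And>x. (U has_derivative (\<lambda>h. G x \<bullet> h)) (at x)"
  and mon: "\<And>x y. x \<noteq> y \<Longrightarrow> (G x - G y) \<bullet> (x - y) \<ge> \<alpha> * (norm (x - y))\<^sup>2 - M * norm (x - y)"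
  shows "U x \<ge> U 0 + \<alpha> / 2 * (norm x)\<^sup>2 - (M + norm (G 0)) * norm x"
proof (cases "x = 0")
  case True then show ?thesis by simp
next
  case False
  define C where "C = M + norm (G 0)"
  define h where "h t = U (t *\<^sub>R x) - \<alpha> * (norm x)\<^sup>2 * t\<^sup>2 / 2 + C * norm x * t" for t
  have dphi: "((\<lambda>t. U (t *\<^sub>R x)) has_real_derivative (G (t *\<^sub>R x) \<bullet> x)) (at t)" for t
  proof -
    have "((\<lambda>t. t *\<^sub>R x) has_derivative (\<lambda>s. s *\<^sub>R x)) (at t)"
      by (auto intro!: derivative_eq_intros)
    from has_derivative_compose[OF this dU]
    have "((\<lambda>t. U (t *\<^sub>R x)) has_derivative (\<lambda>s. G (t *\<^sub>R x) \<bullet> (s *\<^sub>R x))) (at t)" .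
    moreover have "(\<lambda>s. G (t *\<^sub>R x) \<bullet> (s *\<^sub>R x)) = (*) (G (t *\<^sub>R x) \<bullet> x)"
      by (auto simp: fun_eq_iff)
    ultimately show ?thesis by (simp add: has_field_derivative_def)
  qed
  have dh: "(h has_real_derivative (G (t *\<^sub>R x) \<bullet> x - \<alpha> * (norm x)\<^sup>2 * t + C * norm x)) (at t)" for t
    unfolding h_def
    by (rule derivative_eq_intros dphi refl | simp)+
  have "h 0 \<le> h 1"
  proof (rule DERIV_nonneg_imp_increasing_open[of 0 1 h])
    fix t :: real assume t: "0 < t" "t < 1"
    have ne: "t *\<^sub>R x \<noteq> 0" using t False by simp
    have nt: "norm (t *\<^sub>R x) = t * norm x" using t by simp
    from mon[OF ne] nt have "(G (t *\<^sub>R x) - G 0) \<bullet> (t *\<^sub>R x) \<ge> \<alpha> * (t * norm x)\<^sup>2 - M * (t * norm x)"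
      using nt t by simp
    then have "t * ((G (t *\<^sub>R x) - G 0) \<bullet> x) \<ge> t * (\<alpha> * t * (norm x)\<^sup>2 - M * norm x)"
      by (simp add: algebra_simps power2_eq_square)
    then have A: "(G (t *\<^sub>R x) - G 0) \<bullet> x \<ge> \<alpha> * t * (norm x)\<^sup>2 - M * norm x"
      using t by simp
    have B: "G 0 \<bullet> x \<ge> - (norm (G 0) * norm x)"
      using Cauchy_Schwarz_ineq2[of "G 0" x] by (simp add: abs_le_iff)
    have "G (t *\<^sub>R x) \<bullet> x - \<alpha> * (norm x)\<^sup>2 * t + C * norm x \<ge> 0"
      using A B by (simp add: C_def inner_diff_left algebra_simps)
    then show "\<exists>y. (h has_real_derivative y) (at t) \<and> 0 \<le> y" using dh by blast
  next
    show "continuous_on {0..1} h"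
      using dh by (meson DERIV_isCont continuous_at_imp_continuous_on)
  qed simp
  then show ?thesis by (simp add: h_def C_def)
qed

theorem lemma31:
  fixes U :: "'a::euclidean_space \<Rightarrow> real" and \<alpha> \<sigma> :: real and g :: "real \<Rightarrow> real"
  assumes "C2_on_UNIV U"
    and "integrable lborel (\<lambda>x. exp (- U x))"
    and "(\<integral>x. exp (- U x) \<partial>lborel) = 1"
    and "\<alpha> > 0"
    and "g \<in> classG_tilde"
    and "\<forall>r>0. kappa U r \<ge> ereal (\<alpha> - g r / r)"
    and "0 < \<sigma>" and "\<sigma> < \<alpha> / 2"
  shows "(\<integral>\<^sup>+ x. ennreal (exp (\<sigma> * (norm x)\<^sup>2) * exp (- U x)) \<partial>lborel) < \<infinity>"
proof -
  obtain G :: "'a \<Rightarrow> 'a" where dU: "\<And>x. (U has_derivative (\<lambda>h. G x \<bullet> h)) (at x)"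
    using assms(1) unfolding C2_on_UNIV_def by blast
  have gradG: "grad U x = G x" for x
    unfolding grad_def
  proof (rule the_equality)
    show "(U has_derivative (\<lambda>h. G x \<bullet> h)) (at x)" by (rule dU)
  next
    fix v assume "(U has_derivative (\<lambda>h. v \<bullet> h)) (at x)"
    from has_derivative_unique[OF this dU] have "(\<lambda>h. v \<bullet> h) = (\<lambda>h. G x \<bullet> h)" .
    then have "v \<bullet> (v - G x) = G x \<bullet> (v - G x)" by metis
    then have "(v - G x) \<bullet> (v - G x) = 0" by (simp add: inner_diff_left)
    then show "v = G x" by simp
  qed
  obtain M where M: "\<And>r. r > 0 \<Longrightarrow> g r \<le> M"
  proof -
    have "bounded (g ` {0<..})" using assms(5) unfolding classG_tilde_def by blast
    then obtain a where "\<forall>y\<in>g ` {0<..}. norm y \<le> a" unfolding bounded_iff by blast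
    then have "\<And>r. r > 0 \<Longrightarrow> g r \<le> a" by (metis abs_le_D1 greaterThan_iff image_eqI real_norm_def)
    then show ?thesis using that by blast
  qed
  have mon: "(G x - G y) \<bullet> (x - y) \<ge> \<alpha> * (norm (x - y))\<^sup>2 - M * norm (x - y)" if "x \<noteq> y" for x y
  proof -
    define r where "r = norm (x - y)"
    have r: "r > 0" using that by (simp add: r_def)
    have "ereal (\<alpha> - g r / r) \<le> kappa U r" using assms(6) r by blast
    also have "kappa U r \<le> ereal (((grad U x - grad U y) \<bullet> (x - y)) / (norm (x - y))\<^sup>2)"
      unfolding kappa_def by (rule INF_lower2[of "(x, y)"]) (auto simp: r_def)
    finally have "\<alpha> - g r / r \<le> ((G x - G y) \<bullet> (x - y)) / r\<^sup>2"
      by (simp add: gradG r_def)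
    then have "(\<alpha> - g r / r) * r\<^sup>2 \<le> (G x - G y) \<bullet> (x - y)"
      using r by (simp add: pos_le_divide_eq)
    moreover have "(\<alpha> - g r / r) * r\<^sup>2 = \<alpha> * r\<^sup>2 - g r * r"
      using r by (simp add: field_simps power2_eq_square)
    moreover have "g r * r \<le> M * r" using M[OF r] r by (simp add: mult_right_mono)
    ultimately show ?thesis unfolding r_def[symmetric] by linarith
  qed
  define C where "C = M + norm (G 0)"
  have lb: "U x \<ge> U 0 + \<alpha> / 2 * (norm x)\<^sup>2 - C * norm x" for x
    unfolding C_def by (rule lower_bound[OF dU mon])
  define \<beta> where "\<beta> = (\<alpha> / 2 - \<sigma>) / 2"
  have b: "\<beta> > 0" using assms(8) by (simp add: \<beta>_def)
  define K where "K = exp (- U 0 + C\<^sup>2 / (4 * \<beta>))"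
  have pw: "exp (\<sigma> * (norm x)\<^sup>2) * exp (- U x) \<le> K * exp (- \<beta> * (norm x)\<^sup>2)" for x
  proof -
    have q: "C * norm x - \<beta> * (norm x)\<^sup>2 \<le> C\<^sup>2 / (4 * \<beta>)"
    proof -
      have "0 \<le> (2 * \<beta> * norm x - C)\<^sup>2" by simp
      then have "4 * \<beta> * (C * norm x - \<beta> * (norm x)\<^sup>2) \<le> C\<^sup>2"
        by (simp add: power2_eq_square algebra_simps)
      then show ?thesis using b by (simp add: field_simps)
    qed
    have "\<sigma> * (norm x)\<^sup>2 + - U x \<le> - U 0 + C\<^sup>2 / (4 * \<beta>) + - \<beta> * (norm x)\<^sup>2"
    proof -
      have "\<sigma> * (norm x)\<^sup>2 = \<alpha> / 2 * (norm x)\<^sup>2 - 2 * \<beta> * (norm x)\<^sup>2"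
        by (simp add: \<beta>_def field_simps)
      then show ?thesis using lb[of x] q by linarith
    qed
    then show ?thesis unfolding K_def by (simp flip: exp_add)
  qed
  have "(\<integral>\<^sup>+ x. ennreal (exp (\<sigma> * (norm x)\<^sup>2) * exp (- U x)) \<partial>lborel)
      \<le> (\<integral>\<^sup>+ x. ennreal K * ennreal (exp (- \<beta> * (norm (x::'a))\<^sup>2)) \<partial>lborel)"
  proof (intro nn_integral_mono)
    fix x :: 'a
    have "ennreal K * ennreal (exp (- \<beta> * (norm x)\<^sup>2)) = ennreal (K * exp (- \<beta> * (norm x)\<^sup>2))"
      by (simp add: K_def ennreal_mult)
    then show "ennreal (exp (\<sigma> * (norm x)\<^sup>2) * exp (- U x)) \<le> ennreal K * ennreal (exp (- \<beta> * (norm x)\<^sup>2))"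
      using pw[of x] by (simp add: ennreal_leI)
  qed
  also have "\<dots> = ennreal K * (\<integral>\<^sup>+ x. ennreal (exp (- \<beta> * (norm (x::'a))\<^sup>2)) \<partial>lborel)"
    by (rule nn_integral_cmult) measurable
  also have "\<dots> < \<infinity>"
    using gauss_fin[OF b, where 'a='a] by (simp add: ennreal_mult_less_top)
  finally show ?thesis .
qed

end
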